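(* For any hypothesis class $\mathcal{H}$ and integer $k\ge0$, \[ \mathrm{ELdim}(\mathcal{H},k)\le\sup\Big\{t:\binom{t}{\le k+1}\le\mathcal{S}(\mathcal{H},t)\Big\}. \]
   Context: Hypotheses are maps $\mathcal{X}\to\{-1,+1\}$; $\binom{t}{\le j}=\sum_{i=0}^{j}\binom{t}{i}$. A depth-$t$ $\mathcal{X}$-valued tree $\mathbf{x}$ is a sequence of maps $\mathbf{x}_s:\{\pm1\}^{s-1}\to\mathcal{X}$, $s=1,\dots,t$; write $\mathbf{x}_s(\epsilon)=\mathbf{x}_s(\epsilon_1,\dots,\epsilon_{s-1})$. Let $S(\mathcal{H},\mathbf{x})=\{\epsilon\in\{\pm1\}^t:\exists h\in\mathcal{H},\ \epsilon_s=h(\mathbf{x}_s(\epsilon))\ \forall s\}$, and the tree shattering coefficient $\mathcal{S}(\mathcal{H},t)=\max_{\mathbf{x}}|S(\mathcal{H},\mathbf{x})|$ over depth-$t$ trees for $t\ge1$; $\mathcal{S}(\mathcal{H},0)=1$ if $\mathcal{H}\neq\emptyset$ and $0$ otherwise. Extended mistake tree w.r.t. $\mathcal{H}$: a finite full binary tree (possibly a single leaf) in which each internal node $v$ is labeled by $x_v\in\mathcal{X}$ and has two solid downward edges, to its left child (label $-1$) and right child (label $+1$), plus one dashed downward edge to one of its two children; each leaf is labeled by some $h\in\mathcal{H}$ with $h(x_v)$ equal to the direction label at every internal node $v$ on the root-to-leaf path. A root-to-leaf path chooses at each internal node one downward edge; its length is its number of edges. The tree is $(k,m)$-difficult if every root-to-leaf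 path using at most $k$ solid edges has length at least $m$. $\mathrm{ELdim}(\mathcal{H},k)$ is the supremum of $m$ such that a $(k,m)$-difficult extended mistake tree w.r.t. $\mathcal{H}$ exists. *)

theory Defs
  imports Main "HOL-Library.Extended_Nat"
begin

text \<open>Hypotheses are maps into {-1,+1}, represented as functions to int.
  binom_le t j = sum_{i=0}^{j} (t choose i).\<close>

definition binom_le :: "nat \<Rightarrow> nat \<Rightarrow> nat" where
  "binom_le t j = (\<Sum>i\<le>j. t choose i)"

text \<open>A depth-t X-valued tree: xt s gives x_s as a function of the prefix
  (eps_1,...,eps_{s-1}), given as an int list of length s-1.\<close>

definition tree_paths :: "('x \<Rightarrow> int) set \<Rightarrow> (nat \<Rightarrow> int list \<Rightarrow> 'x) \<Rightarrow> nat \<Rightarrow> int list set" where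
  "tree_paths H xt t = {eps. length eps = t \<and> set eps \<subseteq> {-1, 1} \<and>
      (\<exists>h\<in>H. \<forall>s\<in>{1..t}. eps ! (s - 1) = h (xt s (take (s - 1) eps)))}"

definition shatter_coeff :: "('x \<Rightarrow> int) set \<Rightarrow> nat \<Rightarrow> nat" where
  "shatter_coeff H t =
     (if t = 0 then (if H \<noteq> {} then 1 else 0)
      else Max {card (tree_paths H xt t) | xt. True})"

text \<open>Extended mistake trees: Node x d l r has instance x, left child l (label -1),
  right child r (label +1), and a dashed edge to the child with label d.\<close>

datatype ('x, 'h) emtree = ELeaf 'h | ENode 'x int "('x, 'h) emtree" "('x, 'h) emtree"

text \<open>Well-formedness w.r.t. H, given the constraints (x_v, label) along the path so far.\<close>

fun emt_ok :: "('x \<times> int) list \<Rightarrow> ('x \<Rightarrow> int) set \<Rightarrow> ('x, 'x \<Rightarrow> int) emtree \<Rightarrow> bool" where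
  "emt_ok cs H (ELeaf h) = (h \<in> H \<and> (\<forall>(x, y) \<in> set cs. h x = y))"
| "emt_ok cs H (ENode x d l r) =
     (d \<in> {-1, 1} \<and> emt_ok ((x, -1) # cs) H l \<and> emt_ok ((x, 1) # cs) H r)"

definition ext_mistake_tree :: "('x \<Rightarrow> int) set \<Rightarrow> ('x, 'x \<Rightarrow> int) emtree \<Rightarrow> bool" where
  "ext_mistake_tree H T = emt_ok [] H T"

text \<open>Root-to-leaf paths, recorded as (number of solid edges, length).\<close>

fun emt_paths :: "('x, 'h) emtree \<Rightarrow> (nat \<times> nat) set" where
  "emt_paths (ELeaf h) = {(0, 0)}"
| "emt_paths (ENode x d l r) =
     {(s + 1, n + 1) | s n. (s, n) \<in> emt_paths l} \<union>
     {(s + 1, n + 1) | s n. (s, n) \<in> emt_paths r} \<union>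
     {(s, n + 1) | s n. (s, n) \<in> emt_paths (if d = 1 then r else l)}"

definition difficult :: "nat \<Rightarrow> nat \<Rightarrow> ('x, 'h) emtree \<Rightarrow> bool" where
  "difficult k m T = (\<forall>(s, n) \<in> emt_paths T. s \<le> k \<longrightarrow> m \<le> n)"

definition ELdim :: "('x \<Rightarrow> int) set \<Rightarrow> nat \<Rightarrow> enat" where
  "ELdim H k = Sup {enat m | m. \<exists>T. ext_mistake_tree H T \<and> difficult k m T}"

end

theory Submission
  imports Defs
begin

lemma binom_le_Suc: "binom_le (Suc m) (Suc j) = binom_le m (Suc j) + binom_le m j"
proof -
  have "binom_le (Suc m) (Suc j) = (\<Sum>i\<le>Suc j. Suc m choose i)" by (simp add: binom_le_def)
  also have "\<dots> = 1 + (\<Sum>i\<le>j. Suc m choose Suc i)" by (subst sum.atMost_Suc_shift) simp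
  also have "\<dots> = 1 + (\<Sum>i\<le>j. m choose i) + (\<Sum>i\<le>j. m choose Suc i)"
    by (simp add: sum.distrib)
  also have "1 + (\<Sum>i\<le>j. m choose i) + (\<Sum>i\<le>j. m choose Suc i) = (\<Sum>i\<le>j. m choose i) + (\<Sum>i\<le>Suc j. m choose i)"
  proof -
    have "(\<Sum>i\<le>Suc j. m choose i) = 1 + (\<Sum>i\<le>j. m choose Suc i)"
      by (subst sum.atMost_Suc_shift) simp
    then show ?thesis by linarith
  qed
  finally show ?thesis by (simp add: binom_le_def)
qed

lemma binom_le_0: "binom_le 0 j = 1"
  by (induction j) (auto simp: binom_le_def)

lemma tp_finite: "finite (tree_paths G xt m)"
proof -
  have "tree_paths G xt m \<subseteq> {xs. set xs \<subseteq> {-1,1} \<and> length xs = m}"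
    by (auto simp: tree_paths_def)
  moreover have "finite {xs. set xs \<subseteq> {-1::int,1} \<and> length xs = m}"
    by (rule finite_lists_length_eq) simp
  ultimately show ?thesis by (rule finite_subset)
qed

lemma tp_card_le: "card (tree_paths G xt m) \<le> card {xs. set xs \<subseteq> {-1::int,1} \<and> length xs = m}"
proof -
  have "tree_paths G xt m \<subseteq> {xs. set xs \<subseteq> {-1,1} \<and> length xs = m}"
    by (auto simp: tree_paths_def)
  moreover have "finite {xs. set xs \<subseteq> {-1::int,1} \<and> length xs = m}"
    by (rule finite_lists_length_eq) simp
  ultimately show ?thesis by (rule card_mono[rotated])
qed

lemma tp_nonempty:
  assumes "h \<in> G" "\<forall>h\<in>G. \<forall>x. h x \<in> {-1, 1}"
  shows "1 \<le> card (tree_paths G (\<lambda>_ _. x0) m)"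
proof -
  have "h x0 \<in> {-1,1}" using assms by blast
  then have "replicate m (h x0) \<in> tree_paths G (\<lambda>_ _. x0) m"
    using assms(1) by (auto simp: tree_paths_def intro!: bexI[of _ h])
  then have "tree_paths G (\<lambda>_ _. x0) m \<noteq> {}" by blast
  then show ?thesis using tp_finite by (simp add: Suc_le_eq card_gt_0_iff)
qed

lemma emt_ok_ex: "emt_ok cs H T \<Longrightarrow> \<exists>h\<in>H. \<forall>(x,y)\<in>set cs. h x = y"
  by (induction T arbitrary: cs) fastforce+

lemma combine:
  assumes "a \<le> card (tree_paths {h\<in>G. h x = -1} xtl m)"
    and "b \<le> card (tree_paths {h\<in>G. h x = 1} xtr m)"
  shows "\<exists>xt. a + b \<le> card (tree_paths G xt (Suc m))"
proof -
  define xt where "xt = (\<lambda>s p. if s = 1 then x else if hd p = 1 then xtr (s-1) (tl p) else xtl (s-1) (tl p))"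
  have L: "((#) (-1)) ` tree_paths {h\<in>G. h x = -1} xtl m \<subseteq> tree_paths G xt (Suc m)"
  proof
    fix e assume "e \<in> ((#) (-1)) ` tree_paths {h\<in>G. h x = -1} xtl m"
    then obtain eps h where e: "e = (-1) # eps" and len: "length eps = m" and st: "set eps \<subseteq> {-1,1}"
      and h: "h \<in> G" "h x = -1" and P: "\<forall>s\<in>{1..m}. eps ! (s - 1) = h (xtl s (take (s - 1) eps))"
      by (auto simp: tree_paths_def)
    have "\<forall>s\<in>{1..Suc m}. e ! (s - 1) = h (xt s (take (s - 1) e))"
    proof
      fix s assume s: "s \<in> {1..Suc m}"
      show "e ! (s - 1) = h (xt s (take (s - 1) e))"
      proof (cases "s = 1")
        case True then show ?thesis using e h by (simp add: xt_def)
      next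
        case False
        then obtain s' where s': "s = Suc s'" "s' \<in> {1..m}" using s by (cases s) auto
        then obtain s'' where s'': "s' = Suc s''" by (cases s') auto
        have "eps ! (s' - 1) = h (xtl s' (take (s'-1) eps))" using P s' by blast
        then show ?thesis using s' s'' e by (simp add: xt_def)
      qed
    qed
    then show "e \<in> tree_paths G xt (Suc m)" using e len st h by (auto simp: tree_paths_def)
  qed
  have R: "((#) 1) ` tree_paths {h\<in>G. h x = 1} xtr m \<subseteq> tree_paths G xt (Suc m)"
  proof
    fix e assume "e \<in> ((#) 1) ` tree_paths {h\<in>G. h x = 1} xtr m"
    then obtain eps h where e: "e = 1 # eps" and len: "length eps = m" and st: "set eps \<subseteq> {-1,1}"
      and h: "h \<in> G" "h x = 1" and P: "\<forall>s\<in>{1..m}. eps ! (s - 1) = h (xtr s (take (s - 1) eps))"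
      by (auto simp: tree_paths_def)
    have "\<forall>s\<in>{1..Suc m}. e ! (s - 1) = h (xt s (take (s - 1) e))"
    proof
      fix s assume s: "s \<in> {1..Suc m}"
      show "e ! (s - 1) = h (xt s (take (s - 1) e))"
      proof (cases "s = 1")
        case True then show ?thesis using e h by (simp add: xt_def)
      next
        case False
        then obtain s' where s': "s = Suc s'" "s' \<in> {1..m}" using s by (cases s) auto
        then obtain s'' where s'': "s' = Suc s''" by (cases s') auto
        have "eps ! (s' - 1) = h (xtr s' (take (s'-1) eps))" using P s' by blast
        then show ?thesis using s' s'' e by (simp add: xt_def)
      qed
    qed
    then show "e \<in> tree_paths G xt (Suc m)" using e len st h by (auto simp: tree_paths_def)
  qed
  have eq: "card (((#) (-1)) ` tree_paths {h\<in>G. h x = -1} xtl m \<union> ((#) 1) ` tree_paths {h\<in>G. h x = 1} xtr m)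
      = card (tree_paths {h\<in>G. h x = -1} xtl m) + card (tree_paths {h\<in>G. h x = 1} xtr m)"
    by (subst card_Un_disjoint) (auto simp: tp_finite card_image)
  have le: "card (((#) (-1)) ` tree_paths {h\<in>G. h x = -1} xtl m \<union> ((#) 1) ` tree_paths {h\<in>G. h x = 1} xtr m)
      \<le> card (tree_paths G xt (Suc m))"
    using L R by (intro card_mono tp_finite) auto
  show ?thesis using eq le assms by (intro exI[of _ xt]) linarith
qed

lemma main_lemma:
  assumes vals: "\<forall>h\<in>H. \<forall>x. h x \<in> {-1, 1}"
  shows "emt_ok cs H T \<Longrightarrow> (\<forall>(s,n)\<in>emt_paths T. s < j \<longrightarrow> m \<le> n) \<Longrightarrow>
    \<exists>xt. binom_le m j \<le> card (tree_paths {h\<in>H. \<forall>(x,y)\<in>set cs. h x = y} xt m)"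
proof (induction T arbitrary: cs m j)
  case (ELeaf h)
  then have hG: "h \<in> {h\<in>H. \<forall>(x,y)\<in>set cs. h x = y}" by auto
  have "binom_le m j = 1"
  proof (cases j)
    case 0 then show ?thesis by (simp add: binom_le_def)
  next
    case (Suc j') then have "m = 0" using ELeaf.prems by auto
    then show ?thesis by (simp add: binom_le_0)
  qed
  then show ?case using tp_nonempty[OF hG] vals by fastforce
next
  case (ENode x d l r)
  obtain h where hG: "h \<in> {h\<in>H. \<forall>(x,y)\<in>set cs. h x = y}" using emt_ok_ex[OF ENode.prems(1)] by auto
  show ?case
  proof (cases "j = 0 \<or> m = 0")
    case True
    then have "binom_le m j = 1"
    proof
      assume "j = 0" then show ?thesis by (simp add: binom_le_def)
    next
      assume "m = 0" then show ?thesis by (simp add: binom_le_0)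
    qed
    then show ?thesis using tp_nonempty[OF hG] vals by fastforce
  next
    case False
    then obtain j' m' where jm: "j = Suc j'" "m = Suc m'" by (cases j; cases m) auto
    have okl: "emt_ok ((x, -1) # cs) H l" and okr: "emt_ok ((x, 1) # cs) H r" using ENode.prems by auto
    have P: "\<And>s n. (s,n) \<in> emt_paths (ENode x d l r) \<Longrightarrow> s < j \<Longrightarrow> m \<le> n"
      using ENode.prems(2) by blast
    have sl: "\<forall>(s,n)\<in>emt_paths l. s < j' \<longrightarrow> m' \<le> n"
    proof (intro ballI impI, clarify)
      fix s n assume a: "(s,n) \<in> emt_paths l" "s < j'"
      have "(Suc s, Suc n) \<in> emt_paths (ENode x d l r)" using a(1) by auto
      from P[OF this] a(2) jm show "m' \<le> n" by simp
    qed
    have sr: "\<forall>(s,n)\<in>emt_paths r. s < j' \<longrightarrow> m' \<le> n"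
    proof (intro ballI impI, clarify)
      fix s n assume a: "(s,n) \<in> emt_paths r" "s < j'"
      have "(Suc s, Suc n) \<in> emt_paths (ENode x d l r)" using a(1) by auto
      from P[OF this] a(2) jm show "m' \<le> n" by simp
    qed
    have sd: "\<forall>(s,n)\<in>emt_paths (if d = 1 then r else l). s < j \<longrightarrow> m' \<le> n"
    proof (intro ballI impI, clarify)
      fix s n assume a: "(s,n) \<in> emt_paths (if d = 1 then r else l)" "s < j"
      have "(s, Suc n) \<in> emt_paths (ENode x d l r)" using a(1) by auto
      from P[OF this] a(2) jm show "m' \<le> n" by simp
    qed
    have eq1: "{h\<in>H. \<forall>(y,z)\<in>set ((x,-1)#cs). h y = z} = {h\<in>{h\<in>H. \<forall>(x,y)\<in>set cs. h x = y}. h x = -1}" by auto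
    have eq2: "{h\<in>H. \<forall>(y,z)\<in>set ((x,1)#cs). h y = z} = {h\<in>{h\<in>H. \<forall>(x,y)\<in>set cs. h x = y}. h x = 1}" by auto
    have bs: "binom_le m j = binom_le m' j + binom_le m' j'" using jm binom_le_Suc[of m' j'] by simp
    show ?thesis
    proof (cases "d = 1")
      case True
      have sd': "\<forall>(s,n)\<in>emt_paths r. s < j \<longrightarrow> m' \<le> n" using sd True by simp
      obtain xtl where A: "binom_le m' j' \<le> card (tree_paths {h\<in>H. \<forall>(y,z)\<in>set ((x,-1)#cs). h y = z} xtl m')"
        using ENode.IH(1)[OF okl sl] by blast
      obtain xtr where B: "binom_le m' j \<le> card (tree_paths {h\<in>H. \<forall>(y,z)\<in>set ((x,1)#cs). h y = z} xtr m')"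
        using ENode.IH(2)[OF okr sd'] by blast
      obtain xt where "binom_le m' j' + binom_le m' j \<le> card (tree_paths {h\<in>H. \<forall>(x,y)\<in>set cs. h x = y} xt (Suc m'))"
        using combine[OF A[unfolded eq1] B[unfolded eq2]] by blast
      then show ?thesis using bs jm by (intro exI[of _ xt]) simp
    next
      case False
      have sd': "\<forall>(s,n)\<in>emt_paths l. s < j \<longrightarrow> m' \<le> n" using sd False by simp
      obtain xtl where A: "binom_le m' j \<le> card (tree_paths {h\<in>H. \<forall>(y,z)\<in>set ((x,-1)#cs). h y = z} xtl m')"
        using ENode.IH(1)[OF okl sd'] by blast
      obtain xtr where B: "binom_le m' j' \<le> card (tree_paths {h\<in>H. \<forall>(y,z)\<in>set ((x,1)#cs). h y = z} xtr m')"
        using ENode.IH(2)[OF okr sr] by blast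
      obtain xt where "binom_le m' j + binom_le m' j' \<le> card (tree_paths {h\<in>H. \<forall>(x,y)\<in>set cs. h x = y} xt (Suc m'))"
        using combine[OF A[unfolded eq1] B[unfolded eq2]] by blast
      then show ?thesis using bs jm by (intro exI[of _ xt]) simp
    qed
  qed
qed

theorem mainTheorem7:
  fixes H :: "('x \<Rightarrow> int) set" and k :: nat
  assumes "\<forall>h\<in>H. \<forall>x. h x \<in> {-1, 1}"
  shows "ELdim H k \<le> Sup {enat t | t. binom_le t (k + 1) \<le> shatter_coeff H t}"
  unfolding ELdim_def
proof (rule Sup_least)
  fix y assume "y \<in> {enat m | m. \<exists>T. ext_mistake_tree H T \<and> difficult k m T}"
  then obtain m T where y: "y = enat m" and T: "emt_ok [] H T" and D: "difficult k m T"
    by (auto simp: ext_mistake_tree_def)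
  have D': "\<forall>(s,n)\<in>emt_paths T. s < k + 1 \<longrightarrow> m \<le> n" using D by (auto simp: difficult_def)
  obtain xt where X: "binom_le m (k+1) \<le> card (tree_paths H xt m)"
    using main_lemma[OF assms T D'] by auto
  have "binom_le m (k+1) \<le> shatter_coeff H m"
  proof (cases "m = 0")
    case True
    obtain h where "h \<in> H" using emt_ok_ex[OF T] by auto
    then show ?thesis using True by (auto simp: shatter_coeff_def binom_le_0)
  next
    case False
    have fin: "finite {card (tree_paths H xt m) | xt. True}"
      by (rule finite_subset[of _ "{..card {xs. set xs \<subseteq> {-1::int,1} \<and> length xs = m}}"])
         (auto intro: tp_card_le)
    have "card (tree_paths H xt m) \<le> Max {card (tree_paths H xt m) | xt. True}"
      by (rule Max_ge[OF fin]) auto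
    then show ?thesis using X False by (simp add: shatter_coeff_def)
  qed
  then show "y \<le> Sup {enat t | t. binom_le t (k + 1) \<le> shatter_coeff H t}"
    using y by (intro Sup_upper) auto
qed

end
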